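(* Identify the tangent space of $\mathbb O'P^2$ at $P_0=[1,0,0]$ with $\mathbb O'^2$ via the chart $[1,u,v]\mapsto(u,v)$, a pair $(a,b)$ corresponding to the tangent vector with $du=a$, $dv=b$. Then the Riemann curvature tensor of $(\mathbb O'P^2,g)$ at $P_0$ is $$\begin{aligned}R\big((a,b),(c,d),(e,f),(g,h)\big)=&\,4\langle a,e\rangle\langle c,g\rangle-4\langle c,e\rangle\langle a,g\rangle+4\langle b,f\rangle\langle d,h\rangle-4\langle d,f\rangle\langle b,h\rangle\\&-\langle e\bar d,g\bar b\rangle+\langle e\bar b,g\bar d\rangle-\langle c\bar f,a\bar h\rangle+\langle a\bar f,c\bar h\rangle-\langle a\bar d-c\bar b,\ g\bar f-e\bar h\rangle.\end{aligned}$$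
   Context: Para-octonions $\mathbb O'=\mathbb H\oplus\mathbb H$ with product $(q_1,q_2)(p_1,p_2)=(q_1p_1+\bar p_2q_2,\ p_2q_1+q_2\bar p_1)$, conjugation $\overline{(q_1,q_2)}=(\bar q_1,-q_2)$, $\langle a,b\rangle=\mathrm{Re}(a\bar b)$ (signature $(4,4)$), $|a|^2=\langle a,a\rangle$. $\mathbb O'P^2=\mathcal U/_\sim$ where $\mathcal U=\{(1,y,z):1+|y|^2+|z|^2>0\}\cup\{(x,1,z):|x|^2+1+|z|^2>0\}\cup\{(x,y,1):|x|^2+|y|^2+1>0\}$ and $[a,b,c]\sim[d,e,f]$ iff $(a,b,c)=(d\lambda,e\lambda,f\lambda)$ with $|\lambda|^2>0$; charts $[1,u,v]\mapsto(u,v)$ etc. Metric $g$ on each chart, for tangent vector $(du,dv)=(\xi,\eta)$: $ds^2=\frac{|\xi|^2(1+|v|^2)+|\eta|^2(1+|u|^2)-2\mathrm{Re}[(u\bar v)(\eta\bar\xi)]}{(1+|u|^2+|v|^2)^2}$. Curvature convention: in coordinates in which the first derivatives of the metric vanish at the point, $R_{\alpha\beta\gamma\delta}=\tfrac12\big[\partial_\alpha\partial_\delta g_{\beta\gamma}+\partial_\beta\partial_\gamma g_{\alpha\delta}-\partial_\beta\partial_\delta g_{\alpha\gamma}-\partial_\alpha\partial_\gamma g_{\beta\delta}\big]$. *)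

theory Defs
  imports "HOL-Analysis.Analysis"
begin

section \<open>Quaternions (explicit coordinates: a + b i + c j + d k)\<close>

datatype quat = Quat real real real real

fun qadd :: "quat \<Rightarrow> quat \<Rightarrow> quat" where
  "qadd (Quat a1 b1 c1 d1) (Quat a2 b2 c2 d2) = Quat (a1+a2) (b1+b2) (c1+c2) (d1+d2)"

fun qscale :: "real \<Rightarrow> quat \<Rightarrow> quat" where
  "qscale r (Quat a b c d) = Quat (r*a) (r*b) (r*c) (r*d)"

fun qneg :: "quat \<Rightarrow> quat" where
  "qneg (Quat a b c d) = Quat (-a) (-b) (-c) (-d)"

fun qmul :: "quat \<Rightarrow> quat \<Rightarrow> quat" where
  "qmul (Quat a1 b1 c1 d1) (Quat a2 b2 c2 d2) =
     Quat (a1*a2 - b1*b2 - c1*c2 - d1*d2)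
          (a1*b2 + b1*a2 + c1*d2 - d1*c2)
          (a1*c2 - b1*d2 + c1*a2 + d1*b2)
          (a1*d2 + b1*c2 - c1*b2 + d1*a2)"

fun qconj :: "quat \<Rightarrow> quat" where
  "qconj (Quat a b c d) = Quat a (-b) (-c) (-d)"

fun qre :: "quat \<Rightarrow> real" where
  "qre (Quat a b c d) = a"

section \<open>Para-octonions O' = H + H\<close>

datatype pocto = PO quat quat

fun oadd :: "pocto \<Rightarrow> pocto \<Rightarrow> pocto" where
  "oadd (PO q1 q2) (PO p1 p2) = PO (qadd q1 p1) (qadd q2 p2)"

fun oscale :: "real \<Rightarrow> pocto \<Rightarrow> pocto" where
  "oscale r (PO q1 q2) = PO (qscale r q1) (qscale r q2)"

fun omul :: "pocto \<Rightarrow> pocto \<Rightarrow> pocto" where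
  "omul (PO q1 q2) (PO p1 p2) =
     PO (qadd (qmul q1 p1) (qmul (qconj p2) q2)) (qadd (qmul p2 q1) (qmul q2 (qconj p1)))"

fun oconj :: "pocto \<Rightarrow> pocto" where
  "oconj (PO q1 q2) = PO (qconj q1) (qneg q2)"

text \<open>real part: Re (q1,q2) = Re q1 (the real unit is (1,0))\<close>
fun ore :: "pocto \<Rightarrow> real" where
  "ore (PO q1 q2) = qre q1"

definition oinner :: "pocto \<Rightarrow> pocto \<Rightarrow> real" where
  "oinner a b = ore (omul a (oconj b))"

definition onorm2 :: "pocto \<Rightarrow> real" where
  "onorm2 a = oinner a a"

section \<open>Chart [1,u,v] \<mapsto> (u,v), tangent vectors (du,dv)\<close>

type_synonym tvec = "pocto \<times> pocto"

definition tadd :: "tvec \<Rightarrow> tvec \<Rightarrow> tvec" where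
  "tadd X Y = (oadd (fst X) (fst Y), oadd (snd X) (snd Y))"

definition tscale :: "real \<Rightarrow> tvec \<Rightarrow> tvec" where
  "tscale r X = (oscale r (fst X), oscale r (snd X))"

definition ds2 :: "tvec \<Rightarrow> tvec \<Rightarrow> real" where
  "ds2 p X = (let u = fst p; v = snd p; xi = fst X; eta = snd X in
     (onorm2 xi * (1 + onorm2 v) + onorm2 eta * (1 + onorm2 u)
       - 2 * ore (omul (omul u (oconj v)) (omul eta (oconj xi))))
     / (1 + onorm2 u + onorm2 v)^2)"

definition gmet :: "tvec \<Rightarrow> tvec \<Rightarrow> tvec \<Rightarrow> real" where
  "gmet p X Y = (ds2 p (tadd X Y) - ds2 p (tadd X (tscale (-1) Y))) / 4"

definition D2_0 :: "(tvec \<Rightarrow> real) \<Rightarrow> tvec \<Rightarrow> tvec \<Rightarrow> real" where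
  "D2_0 F A B = deriv (\<lambda>s. deriv (\<lambda>t. F (tadd (tscale s B) (tscale t A))) 0) 0"

text \<open>Riemann curvature at P0 = [1,0,0] per the stated convention (first
  derivatives of g vanish at the origin of this chart), extended
  multilinearly from coordinate vectors to arbitrary tangent vectors:
  R(X1,X2,X3,X4) = 1/2 [d_1 d_4 g_23 + d_2 d_3 g_14 - d_2 d_4 g_13 - d_1 d_3 g_24].\<close>
definition Rcurv0 :: "tvec \<Rightarrow> tvec \<Rightarrow> tvec \<Rightarrow> tvec \<Rightarrow> real" where
  "Rcurv0 X1 X2 X3 X4 = (1/2) *
     (D2_0 (\<lambda>p. gmet p X2 X3) X1 X4 + D2_0 (\<lambda>p. gmet p X1 X4) X2 X3
      - D2_0 (\<lambda>p. gmet p X1 X3) X2 X4 - D2_0 (\<lambda>p. gmet p X2 X4) X1 X3)"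

definition osub :: "pocto \<Rightarrow> pocto \<Rightarrow> pocto" where
  "osub a b = oadd a (oscale (-1) b)"

end

theory Submission
  imports Defs
begin


lemma calc2:
  fixes a0 a1 a2 a3 q1 q2 q3 :: real
  shows "deriv (\<lambda>s. deriv (\<lambda>t. (a0 + a1 * s^2 + a2 * s * t + a3 * t^2) / (1 + q1 * s^2 + q2 * s * t + q3 * t^2)^2) 0) 0
         = a2 - 2 * a0 * q2"
proof -
  define G where "G s = s  *  (a2 * (1+q1 * s^2) - 2 * q2 * (a0+a1 * s^2)) / (1+q1 * s^2)^3" for s :: real
  have inner: "deriv (\<lambda>t. (a0 + a1 * s^2 + a2 * s * t + a3 * t^2) / (1 + q1 * s^2 + q2 * s * t + q3 * t^2)^2) 0 = G s"
    if ne: "1 + q1 * s^2 \<noteq> 0" for s :: real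
  proof (rule DERIV_imp_deriv)
    have "((\<lambda>t. (a0 + a1 * s^2 + a2 * s * t + a3 * t^2) / (1 + q1 * s^2 + q2 * s * t + q3 * t^2)^2) has_field_derivative
      ((a2 * s + 2 * a3 * 0)  *  (1 + q1 * s^2 + q2 * s * 0 + q3 * 0^2)^2 - (a0 + a1 * s^2 + a2 * s * 0 + a3 * 0^2)  *  (2 * (1 + q1 * s^2 + q2 * s * 0 + q3 * 0^2) * (q2 * s + 2 * q3 * 0)))
        / ((1 + q1 * s^2 + q2 * s * 0 + q3 * 0^2)^2)^2) (at 0)"
      using ne by (auto intro!: derivative_eq_intros simp: power2_eq_square)
    moreover have "((a2 * s + 2 * a3 * 0)  *  (1 + q1 * s^2 + q2 * s * 0 + q3 * 0^2)^2 - (a0 + a1 * s^2 + a2 * s * 0 + a3 * 0^2)  *  (2 * (1 + q1 * s^2 + q2 * s * 0 + q3 * 0^2) * (q2 * s + 2 * q3 * 0)))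
        / ((1 + q1 * s^2 + q2 * s * 0 + q3 * 0^2)^2)^2 = G s"
    proof -
      define D where "D = 1 + q1 * s^2"
      have D: "D \<noteq> 0" using ne D_def by simp
      have "((a2 * s + 2 * a3 * 0) * (1 + q1 * s^2 + q2 * s * 0 + q3 * 0^2)^2 - (a0 + a1 * s^2 + a2 * s * 0 + a3 * 0^2) * (2 * (1 + q1 * s^2 + q2 * s * 0 + q3 * 0^2) * (q2 * s + 2 * q3 * 0)))
        / ((1 + q1 * s^2 + q2 * s * 0 + q3 * 0^2)^2)^2 = (a2 * s * D^2 - (a0 + a1 * s^2) * (2 * D * (q2 * s))) / (D^2)^2"
        unfolding D_def by simp
      also have "\<dots> = s * (a2 * D - 2 * q2 * (a0 + a1 * s^2)) / D^3"
        using D by (simp add: divide_simps) (simp add: algebra_simps eval_nat_numeral)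
      finally show ?thesis unfolding G_def D_def .
    qed
    ultimately show "((\<lambda>t. (a0 + a1 * s^2 + a2 * s * t + a3 * t^2) / (1 + q1 * s^2 + q2 * s * t + q3 * t^2)^2) has_field_derivative G s) (at 0)"
      by simp
  qed
  have ev: "eventually (\<lambda>s. 1 + q1 * s^2 \<noteq> 0) (nhds (0::real))"
  proof -
    have "((\<lambda>s::real. 1 + q1 * s^2) \<longlongrightarrow> 1 + q1 * 0^2) (nhds 0)"
      by (intro tendsto_intros filterlim_ident)
    then show ?thesis by (rule tendsto_imp_eventually_ne) simp
  qed
  have "deriv (\<lambda>s. deriv (\<lambda>t. (a0 + a1 * s^2 + a2 * s * t + a3 * t^2) / (1 + q1 * s^2 + q2 * s * t + q3 * t^2)^2) 0) 0 = deriv G 0"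
    by (rule deriv_cong_ev[OF eventually_mono[OF ev]]) (auto simp: inner)
  also have "deriv G 0 = a2 - 2 * a0 * q2"
  proof (rule DERIV_imp_deriv)
    have "(G has_field_derivative
       ((1  *  (a2 * (1+q1 * 0^2) - 2 * q2 * (a0+a1 * 0^2)) + 0  *  (a2 * (q1 * (2 * 0)) - 2 * q2 * (a1 * (2 * 0))))  *  (1+q1 * 0^2)^3
         - 0  *  (a2 * (1+q1 * 0^2) - 2 * q2 * (a0+a1 * 0^2))  *  (3 * (1+q1 * 0^2)^2 * (q1 * (2 * 0)))) / ((1+q1 * 0^2)^3)^2) (at 0)"
      unfolding G_def[abs_def] by (auto intro!: derivative_eq_intros)
    then show "(G has_field_derivative a2 - 2 * a0 * q2) (at 0)" by (simp add: mult.commute mult.left_commute)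
  qed
  finally show ?thesis .
qed

lemma po_cases:
  obtains x0 x1 x2 x3 x4 x5 x6 x7 where "p = PO (Quat x0 x1 x2 x3) (Quat x4 x5 x6 x7)"
  by (metis pocto.exhaust quat.exhaust)


lemma omul_add_l: "omul (oadd x y) z = oadd (omul x z) (omul y z)"
proof -
  obtain x_0 x_1 x_2 x_3 x_4 x_5 x_6 x_7 where x: "x = PO (Quat x_0 x_1 x_2 x_3) (Quat x_4 x_5 x_6 x_7)" by (rule po_cases)
  obtain y_0 y_1 y_2 y_3 y_4 y_5 y_6 y_7 where y: "y = PO (Quat y_0 y_1 y_2 y_3) (Quat y_4 y_5 y_6 y_7)" by (rule po_cases)
  obtain z_0 z_1 z_2 z_3 z_4 z_5 z_6 z_7 where z: "z = PO (Quat z_0 z_1 z_2 z_3) (Quat z_4 z_5 z_6 z_7)" by (rule po_cases)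
  show ?thesis unfolding x y z by (simp add: algebra_simps)
qed

lemma omul_add_r: "omul z (oadd x y) = oadd (omul z x) (omul z y)"
proof -
  obtain x_0 x_1 x_2 x_3 x_4 x_5 x_6 x_7 where x: "x = PO (Quat x_0 x_1 x_2 x_3) (Quat x_4 x_5 x_6 x_7)" by (rule po_cases)
  obtain y_0 y_1 y_2 y_3 y_4 y_5 y_6 y_7 where y: "y = PO (Quat y_0 y_1 y_2 y_3) (Quat y_4 y_5 y_6 y_7)" by (rule po_cases)
  obtain z_0 z_1 z_2 z_3 z_4 z_5 z_6 z_7 where z: "z = PO (Quat z_0 z_1 z_2 z_3) (Quat z_4 z_5 z_6 z_7)" by (rule po_cases)
  show ?thesis unfolding x y z by (simp add: algebra_simps)
qed

lemma omul_scale_l: "omul (oscale r x) z = oscale r (omul x z)"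
proof -
  obtain x_0 x_1 x_2 x_3 x_4 x_5 x_6 x_7 where x: "x = PO (Quat x_0 x_1 x_2 x_3) (Quat x_4 x_5 x_6 x_7)" by (rule po_cases)
  obtain z_0 z_1 z_2 z_3 z_4 z_5 z_6 z_7 where z: "z = PO (Quat z_0 z_1 z_2 z_3) (Quat z_4 z_5 z_6 z_7)" by (rule po_cases)
  show ?thesis unfolding x z by (simp add: algebra_simps)
qed

lemma omul_scale_r: "omul z (oscale r x) = oscale r (omul z x)"
proof -
  obtain x_0 x_1 x_2 x_3 x_4 x_5 x_6 x_7 where x: "x = PO (Quat x_0 x_1 x_2 x_3) (Quat x_4 x_5 x_6 x_7)" by (rule po_cases)
  obtain z_0 z_1 z_2 z_3 z_4 z_5 z_6 z_7 where z: "z = PO (Quat z_0 z_1 z_2 z_3) (Quat z_4 z_5 z_6 z_7)" by (rule po_cases)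
  show ?thesis unfolding x z by (simp add: algebra_simps)
qed

lemma oconj_add: "oconj (oadd x y) = oadd (oconj x) (oconj y)"
proof -
  obtain x_0 x_1 x_2 x_3 x_4 x_5 x_6 x_7 where x: "x = PO (Quat x_0 x_1 x_2 x_3) (Quat x_4 x_5 x_6 x_7)" by (rule po_cases)
  obtain y_0 y_1 y_2 y_3 y_4 y_5 y_6 y_7 where y: "y = PO (Quat y_0 y_1 y_2 y_3) (Quat y_4 y_5 y_6 y_7)" by (rule po_cases)
  show ?thesis unfolding x y by (simp add: algebra_simps)
qed

lemma oconj_scale: "oconj (oscale r x) = oscale r (oconj x)"
proof -
  obtain x_0 x_1 x_2 x_3 x_4 x_5 x_6 x_7 where x: "x = PO (Quat x_0 x_1 x_2 x_3) (Quat x_4 x_5 x_6 x_7)" by (rule po_cases)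
  show ?thesis unfolding x by (simp add: algebra_simps)
qed

lemma ore_add: "ore (oadd x y) = ore x + ore y"
proof -
  obtain x_0 x_1 x_2 x_3 x_4 x_5 x_6 x_7 where x: "x = PO (Quat x_0 x_1 x_2 x_3) (Quat x_4 x_5 x_6 x_7)" by (rule po_cases)
  obtain y_0 y_1 y_2 y_3 y_4 y_5 y_6 y_7 where y: "y = PO (Quat y_0 y_1 y_2 y_3) (Quat y_4 y_5 y_6 y_7)" by (rule po_cases)
  show ?thesis unfolding x y by (simp add: algebra_simps)
qed

lemma ore_scale: "ore (oscale r x) = r * ore x"
proof -
  obtain x_0 x_1 x_2 x_3 x_4 x_5 x_6 x_7 where x: "x = PO (Quat x_0 x_1 x_2 x_3) (Quat x_4 x_5 x_6 x_7)" by (rule po_cases)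
  show ?thesis unfolding x by (simp add: algebra_simps)
qed

lemma oinner_sym: "ore (omul y (oconj x)) = ore (omul x (oconj y))"
proof -
  obtain x_0 x_1 x_2 x_3 x_4 x_5 x_6 x_7 where x: "x = PO (Quat x_0 x_1 x_2 x_3) (Quat x_4 x_5 x_6 x_7)" by (rule po_cases)
  obtain y_0 y_1 y_2 y_3 y_4 y_5 y_6 y_7 where y: "y = PO (Quat y_0 y_1 y_2 y_3) (Quat y_4 y_5 y_6 y_7)" by (rule po_cases)
  show ?thesis unfolding x y by (simp add: algebra_simps)
qed

lemmas lin = omul_add_l omul_add_r omul_scale_l omul_scale_r oconj_add oconj_scale ore_add ore_scale

definition R4 :: "pocto \<Rightarrow> pocto \<Rightarrow> pocto \<Rightarrow> pocto \<Rightarrow> real" where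
  "R4 p q r w = ore (omul (omul p (oconj q)) (omul r (oconj w)))"


lemma oconj_mul: "oconj (omul x y) = omul (oconj y) (oconj x)"
proof -
  obtain x_0 x_1 x_2 x_3 x_4 x_5 x_6 x_7 where x: "x = PO (Quat x_0 x_1 x_2 x_3) (Quat x_4 x_5 x_6 x_7)" by (rule po_cases)
  obtain y_0 y_1 y_2 y_3 y_4 y_5 y_6 y_7 where y: "y = PO (Quat y_0 y_1 y_2 y_3) (Quat y_4 y_5 y_6 y_7)" by (rule po_cases)
  show ?thesis unfolding x y by (simp add: algebra_simps)
qed

lemma oconj_oconj: "oconj (oconj x) = x"
proof -
  obtain x_0 x_1 x_2 x_3 x_4 x_5 x_6 x_7 where x: "x = PO (Quat x_0 x_1 x_2 x_3) (Quat x_4 x_5 x_6 x_7)" by (rule po_cases)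
  show ?thesis unfolding x by (simp add: algebra_simps)
qed

lemma ore_oconj: "ore (oconj x) = ore x"
proof -
  obtain x_0 x_1 x_2 x_3 x_4 x_5 x_6 x_7 where x: "x = PO (Quat x_0 x_1 x_2 x_3) (Quat x_4 x_5 x_6 x_7)" by (rule po_cases)
  show ?thesis unfolding x by (simp add: algebra_simps)
qed

lemma oinner_conj: "oinner (oconj x) (oconj y) = oinner x y"
proof -
  obtain x_0 x_1 x_2 x_3 x_4 x_5 x_6 x_7 where x: "x = PO (Quat x_0 x_1 x_2 x_3) (Quat x_4 x_5 x_6 x_7)" by (rule po_cases)
  obtain y_0 y_1 y_2 y_3 y_4 y_5 y_6 y_7 where y: "y = PO (Quat y_0 y_1 y_2 y_3) (Quat y_4 y_5 y_6 y_7)" by (rule po_cases)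
  show ?thesis unfolding x y by (simp add: oinner_def algebra_simps)
qed

lemma compA: "oinner (omul x y) (omul x w) = onorm2 x * oinner y w"
proof -
  obtain x_0 x_1 x_2 x_3 x_4 x_5 x_6 x_7 where x: "x = PO (Quat x_0 x_1 x_2 x_3) (Quat x_4 x_5 x_6 x_7)" by (rule po_cases)
  obtain y_0 y_1 y_2 y_3 y_4 y_5 y_6 y_7 where y: "y = PO (Quat y_0 y_1 y_2 y_3) (Quat y_4 y_5 y_6 y_7)" by (rule po_cases)
  obtain w_0 w_1 w_2 w_3 w_4 w_5 w_6 w_7 where w: "w = PO (Quat w_0 w_1 w_2 w_3) (Quat w_4 w_5 w_6 w_7)" by (rule po_cases)
  show ?thesis unfolding x y w oinner_def onorm2_def
    by (simp only: omul.simps oconj.simps qmul.simps qadd.simps qconj.simps qneg.simps ore.simps qre.simps) algebra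
qed

lemma oinner_lin:
  "oinner (oadd x y) z = oinner x z + oinner y z"
  "oinner z (oadd x y) = oinner z x + oinner z y"
  "oinner (oscale r x) z = r * oinner x z"
  "oinner z (oscale r x) = r * oinner z x"
  unfolding oinner_def by (simp_all add: lin)

lemma oinner_symm: "oinner x y = oinner y x"
  unfolding oinner_def by (rule oinner_sym)

lemma compB: "oinner (omul x y) (omul z w) + oinner (omul z y) (omul x w) = 2 * oinner x z * oinner y w"
proof -
  have "oinner (omul (oadd x z) y) (omul (oadd x z) w) = onorm2 (oadd x z) * oinner y w"
    by (rule compA)
  moreover have "onorm2 (oadd x z) = onorm2 x + 2 * oinner x z + onorm2 z"
    unfolding onorm2_def by (simp add: oinner_lin oinner_symm[of z x])
  ultimately show ?thesis
    using compA[of x y w] compA[of z y w]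
    by (simp add: lin oinner_lin algebra_simps)
qed

lemma R4_inner: "R4 p q r w = oinner (omul p (oconj q)) (omul w (oconj r))"
  unfolding R4_def oinner_def by (simp add: oconj_mul oconj_oconj)

lemma R4_conj: "R4 p q r w = R4 w r q p"
  unfolding R4_def by (metis ore_oconj oconj_mul oconj_oconj)

lemma R4_flip: "R4 p q r w = 2 * oinner p w * oinner q r - R4 p r q w"
  using compB[of p "oconj q" w "oconj r"] oinner_conj[of q r]
  unfolding R4_inner by (simp add: oinner_symm[of "omul w (oconj q)"])

lemma oinner_prod: "oinner (omul x (oconj y)) (omul z (oconj w)) = R4 x y w z"
  unfolding R4_inner ..

definition dnum :: "tvec \<Rightarrow> tvec \<Rightarrow> real" where
  "dnum p X = onorm2 (fst X) * (1 + onorm2 (snd p)) + onorm2 (snd X) * (1 + onorm2 (fst p))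
       - 2 * ore (omul (omul (fst p) (oconj (snd p))) (omul (snd X) (oconj (fst X))))"

definition dden :: "tvec \<Rightarrow> real" where
  "dden p = 1 + onorm2 (fst p) + onorm2 (snd p)"

lemma gmet_eq: "gmet p X Y = ((dnum p (tadd X Y) - dnum p (tadd X (tscale (-1) Y))) / 4) / (dden p)^2"
  unfolding gmet_def ds2_def dnum_def dden_def Let_def by (simp add: diff_divide_distrib)


lemma dden_line:
  "dden (tadd (tscale s (b1, b2)) (tscale t (a1, a2))) =
    1 + (onorm2 b1 + onorm2 b2) * s^2 + (2 * (oinner a1 b1 + oinner a2 b2)) * s * t
      + (onorm2 a1 + onorm2 a2) * t^2"
  unfolding dden_def tadd_def tscale_def onorm2_def oinner_def
  by (simp add: lin oinner_sym algebra_simps power2_eq_square)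

lemma dnum_line:
  "(dnum (tadd (tscale s (b1, b2)) (tscale t (a1, a2))) (tadd (x1, x2) (y1, y2))
     - dnum (tadd (tscale s (b1, b2)) (tscale t (a1, a2))) (tadd (x1, x2) (tscale (-1) (y1, y2)))) / 4 =
    (oinner x1 y1 + oinner x2 y2)
    + (oinner x1 y1 * onorm2 b2 + oinner x2 y2 * onorm2 b1 - (R4 b1 b2 x2 y1 + R4 b1 b2 y2 x1)) * s^2
    + (2 * oinner x1 y1 * oinner a2 b2 + 2 * oinner x2 y2 * oinner a1 b1
        - (R4 b1 a2 x2 y1 + R4 b1 a2 y2 x1 + R4 a1 b2 x2 y1 + R4 a1 b2 y2 x1)) * s * t
    + (oinner x1 y1 * onorm2 a2 + oinner x2 y2 * onorm2 a1 - (R4 a1 a2 x2 y1 + R4 a1 a2 y2 x1)) * t^2"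
  unfolding dnum_def tadd_def tscale_def onorm2_def oinner_def
  by (simp add: lin oinner_sym R4_def[symmetric] algebra_simps power2_eq_square) (simp add: field_simps)

lemma D2_formula:
  "D2_0 (\<lambda>p. gmet p (x1, x2) (y1, y2)) (a1, a2) (b1, b2) =
     (2 * oinner x1 y1 * oinner a2 b2 + 2 * oinner x2 y2 * oinner a1 b1
        - (R4 b1 a2 x2 y1 + R4 b1 a2 y2 x1 + R4 a1 b2 x2 y1 + R4 a1 b2 y2 x1))
     - 2 * (oinner x1 y1 + oinner x2 y2) * (2 * (oinner a1 b1 + oinner a2 b2))"
  unfolding D2_0_def gmet_eq by (simp only: dnum_line dden_line calc2)

theorem corollary6p8:
  fixes a b c d e f g h :: pocto
  shows "Rcurv0 (a, b) (c, d) (e, f) (g, h) =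
      4 * oinner a e * oinner c g - 4 * oinner c e * oinner a g
    + 4 * oinner b f * oinner d h - 4 * oinner d f * oinner b h
    - oinner (omul e (oconj d)) (omul g (oconj b))
    + oinner (omul e (oconj b)) (omul g (oconj d))
    - oinner (omul c (oconj f)) (omul a (oconj h))
    + oinner (omul a (oconj f)) (omul c (oconj h))
    - oinner (osub (omul a (oconj d)) (omul c (oconj b)))
             (osub (omul g (oconj f)) (omul e (oconj h)))"
proof -
  have c1: "R4 g b d e = R4 e d b g" "R4 a h f c = R4 c f h a" "R4 g b f c = R4 c f b g"
    "R4 a h d e = R4 e d h a" "R4 g d b e = R4 e b d g" "R4 c h f a = R4 a f h c"
    "R4 g d f a = R4 a f d g" "R4 c h b e = R4 e b h c"
    by (rule R4_conj)+
  have f1: "R4 e d h a = 2 * oinner e a * oinner d h - R4 a d h e"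
    using R4_flip[of e d h a] R4_conj[of e h d a] by simp
  have f2: "R4 c f b g = 2 * oinner c g * oinner f b - R4 c b f g"
    using R4_flip[of c f b g] by simp
  have f3: "R4 e b h c = 2 * oinner e c * oinner b h - R4 c b h e"
    using R4_flip[of e b h c] R4_conj[of e h b c] by simp
  have f4: "R4 a f d g = 2 * oinner a g * oinner f d - R4 a d f g"
    using R4_flip[of a f d g] by simp
  show ?thesis
    unfolding Rcurv0_def D2_formula osub_def
    apply (simp only: oinner_lin oinner_prod c1)
    apply (simp only: f1 f2 f3 f4)
    apply (simp add: algebra_simps oinner_symm)
    done
qed
end
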